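(* Let $k=k(N)=o(N)$ and consider the $S_k$ shuffle with boundary rates $\delta^{(k)}_j=\frac{k^2+3j^2-1}{(2j+1)(2j-1)}$, $2\le j\le k-1$. There exist absolute constants $C>0$ and $c\in(0,1)$ such that for all $N$ sufficiently large and all $x\in[N]$, $P_x(\tilde\tau_{>4k}>C/k)\le c$.
   Context: The $S_k$ shuffle with boundary rates $(\delta_j)$: on $N$ cards, each block of $k$ consecutive positions is uniformly reshuffled at rate 1, and for each $2\le j\le k-1$ the first $j$ cards and the last $j$ cards are each uniformly reshuffled at rate $\delta_j$. Let $Z_{1,t}$ be the position at time $t$ of the card with label 1; $(Z_{1,t})_{t\ge0}$ is itself a Markov chain on $[N]$, and $P_x$ (with expectation $E_x$) denotes its law when $Z_{1,0}=x$. For $y\in[N]$, $\tilde\tau_{>y}=\inf\{t\ge0:Z_{1,t}>y\}$ and $\tilde\tau_{<y}=\inf\{t\ge0:Z_{1,t}<y\}$. *)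

theory Defs
  imports "HOL-Analysis.Analysis"
begin

definition delta :: "nat \<Rightarrow> nat \<Rightarrow> real" where
  "delta k j = (real k ^ 2 + 3 * real j ^ 2 - 1) / ((2 * real j + 1) * (2 * real j - 1))"

text \<open>Jump rate of the card with label 1 from position x to position y (x, y in [N], x \<noteq> y)
  in the S_k shuffle with boundary rates delta k j: each k-block {i..i+k-1} is uniformly
  reshuffled at rate 1, and for 2 \<le> j \<le> k-1 the first j and the last j cards are uniformly
  reshuffled at rate delta k j. A uniform reshuffle of a block of size m containing x
  sends the card to each position of the block with probability 1/m.\<close>
definition Sk_rate :: "nat \<Rightarrow> nat \<Rightarrow> nat \<Rightarrow> nat \<Rightarrow> real" where
  "Sk_rate N k x y =
     (\<Sum>i\<in>{1..N+1-k}. if i \<le> x \<and> x \<le> i+k-1 \<and> i \<le> y \<and> y \<le> i+k-1 then 1 / real k else 0)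
   + (\<Sum>j\<in>{2..k-1}. delta k j *
        ((if x \<le> j \<and> y \<le> j then 1 / real j else 0)
       + (if N+1-j \<le> x \<and> N+1-j \<le> y then 1 / real j else 0)))"

definition Sk_gen :: "nat \<Rightarrow> nat \<Rightarrow> nat \<Rightarrow> nat \<Rightarrow> real" where
  "Sk_gen N k x y =
     (if x = y then - (\<Sum>z\<in>{1..N}-{x}. Sk_rate N k x z) else Sk_rate N k x y)"

fun restr_pow :: "(nat \<Rightarrow> nat \<Rightarrow> real) \<Rightarrow> nat set \<Rightarrow> nat \<Rightarrow> nat \<Rightarrow> nat \<Rightarrow> real" where
  "restr_pow Q D 0 a b = (if a = b then 1 else 0)"
| "restr_pow Q D (Suc n) a b = (\<Sum>c\<in>D. Q a c * restr_pow Q D n c b)"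

text \<open>Entries of exp(t Q_D), the transition kernel of the chain killed upon leaving D.\<close>
definition killed_kernel :: "(nat \<Rightarrow> nat \<Rightarrow> real) \<Rightarrow> nat set \<Rightarrow> real \<Rightarrow> nat \<Rightarrow> nat \<Rightarrow> real" where
  "killed_kernel Q D t a b = (\<Sum>n. t ^ n / fact n * restr_pow Q D n a b)"

text \<open>P_x(tau_{>y} > t) for the position chain Z_1 of the S_k shuffle on N cards:
  the probability that the chain started at x stays in {1..y} during [0,t].\<close>
definition surv_gt :: "nat \<Rightarrow> nat \<Rightarrow> nat \<Rightarrow> real \<Rightarrow> nat \<Rightarrow> real" where
  "surv_gt N k y t x =
     (if x \<in> {1..y} then (\<Sum>z\<in>{1..y}. killed_kernel (Sk_gen N k) {1..y} t x z) else 0)"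

end

theory Submission
  imports Defs
begin

lemma rp_binom:
  assumes fin: "finite D" and aD: "a \<in> D"
  shows "restr_pow Q D n a b = (\<Sum>i\<le>n. real (n choose i) * (-m)^(n-i) *
            restr_pow (\<lambda>x y. Q x y + (if x = y then m else 0)) D i a b)"
  using aD
proof (induction n arbitrary: a)
  case 0
  then show ?case by simp
next
  case (Suc n)
  define B where "B = (\<lambda>x y. Q x y + (if x = y then m else (0::real)))"
  define P where "P = restr_pow B D"
  define x where "x = (\<lambda>i. (-m)^(Suc n - i) * P i a b)"
  have IH: "\<And>c. c \<in> D \<Longrightarrow> restr_pow Q D n c b = (\<Sum>i\<le>n. real (n choose i) * (-m)^(n-i) * P i c b)"
    using Suc.IH unfolding P_def B_def by blast
  have Qs: "\<And>c. Q a c = B a c - (if a = c then m else 0)" unfolding B_def by simp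
  have "restr_pow Q D (Suc n) a b = (\<Sum>c\<in>D. B a c * restr_pow Q D n c b) - (\<Sum>c\<in>D. (if a = c then m else 0) * restr_pow Q D n c b)"
    by (simp add: Qs left_diff_distrib sum_subtractf)
  also have "(\<Sum>c\<in>D. (if a = c then m else 0) * restr_pow Q D n c b) = m * restr_pow Q D n a b"
  proof -
    have "(\<Sum>c\<in>D. (if a = c then m else 0) * restr_pow Q D n c b) = (\<Sum>c\<in>D. if a = c then m * restr_pow Q D n c b else 0)"
      by (rule sum.cong) auto
    then show ?thesis using fin Suc.prems by simp
  qed
  also have "(\<Sum>c\<in>D. B a c * restr_pow Q D n c b) = (\<Sum>c\<in>D. B a c * (\<Sum>i\<le>n. real (n choose i) * (-m)^(n-i) * P i c b))"
    by (rule sum.cong) (auto simp: IH)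
  also have "\<dots> = (\<Sum>i\<le>n. real (n choose i) * (-m)^(n-i) * P (Suc i) a b)"
    by (simp add: P_def sum_distrib_left sum_distrib_right mult.assoc mult.left_commute sum.swap[of _ D])
  also have "m * restr_pow Q D n a b = m * (\<Sum>i\<le>n. real (n choose i) * (-m)^(n-i) * P i a b)"
    using IH Suc.prems by simp
  finally have L: "restr_pow Q D (Suc n) a b = (\<Sum>i\<le>n. real (n choose i) * x (Suc i)) + (\<Sum>i\<le>n. real (n choose i) * x i)"
  proof -
    assume h: "restr_pow Q D (Suc n) a b = (\<Sum>i\<le>n. real (n choose i) * (-m)^(n-i) * P (Suc i) a b) - m * (\<Sum>i\<le>n. real (n choose i) * (- m) ^ (n - i) * P i a b)"
    have e1: "(\<Sum>i\<le>n. real (n choose i) * (-m)^(n-i) * P (Suc i) a b) = (\<Sum>i\<le>n. real (n choose i) * x (Suc i))"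
      by (simp add: x_def mult.assoc)
    have e2: "- (m * (\<Sum>i\<le>n. real (n choose i) * (- m) ^ (n - i) * P i a b)) = (\<Sum>i\<le>n. real (n choose i) * x i)"
      unfolding x_def sum_distrib_left sum_negf[symmetric]
      by (rule sum.cong) (auto simp: Suc_diff_le)
    show ?thesis using h e1 e2 by linarith
  qed
  have R: "(\<Sum>i\<le>Suc n. real (Suc n choose i) * x i) = (\<Sum>i\<le>n. real (n choose i) * x (Suc i)) + (\<Sum>i\<le>n. real (n choose i) * x i)"
  proof -
    have r1: "(\<Sum>i\<le>Suc n. real (Suc n choose i) * x i) = x 0 + (\<Sum>i\<le>n. real (Suc n choose Suc i) * x (Suc i))"
      by (subst sum.atMost_Suc_shift) simp
    have r2: "(\<Sum>i\<le>n. real (Suc n choose Suc i) * x (Suc i)) = (\<Sum>i\<le>n. real (n choose i) * x (Suc i)) + (\<Sum>i\<le>n. real (n choose Suc i) * x (Suc i))"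
      by (simp add: algebra_simps sum.distrib)
    have r3: "x 0 + (\<Sum>i\<le>n. real (n choose Suc i) * x (Suc i)) = (\<Sum>i\<le>Suc n. real (n choose i) * x i)"
      by (subst sum.atMost_Suc_shift) simp
    have r4: "(\<Sum>i\<le>Suc n. real (n choose i) * x i) = (\<Sum>i\<le>n. real (n choose i) * x i)" by simp
    show ?thesis using r1 r2 r3 r4 by linarith
  qed
  have "restr_pow Q D (Suc n) a b = (\<Sum>i\<le>Suc n. real (Suc n choose i) * x i)" using L R by simp
  then show ?case unfolding x_def P_def B_def by (simp only: mult.assoc)
qed


lemma rp_nonneg:
  assumes "\<And>x y. x \<in> D \<Longrightarrow> y \<in> D \<Longrightarrow> B x y \<ge> 0" and "a \<in> D"
  shows "restr_pow B D i a b \<ge> 0"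
  using assms(2)
proof (induction i arbitrary: a)
  case 0 then show ?case by simp
next
  case (Suc i) then show ?case by (auto intro!: sum_nonneg mult_nonneg_nonneg assms(1))
qed

lemma rp_bound:
  assumes "\<And>x. x \<in> D \<Longrightarrow> (\<Sum>y\<in>D. \<bar>B x y\<bar>) \<le> W" and "W \<ge> 1" and "a \<in> D"
  shows "\<bar>restr_pow B D i a b\<bar> \<le> W ^ i"
  using assms(3)
proof (induction i arbitrary: a)
  case 0 then show ?case by simp
next
  case (Suc i)
  have "\<bar>restr_pow B D (Suc i) a b\<bar> \<le> (\<Sum>c\<in>D. \<bar>B a c * restr_pow B D i c b\<bar>)"
    unfolding restr_pow.simps by (rule sum_abs)
  also have "\<dots> = (\<Sum>c\<in>D. \<bar>B a c\<bar> * \<bar>restr_pow B D i c b\<bar>)"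
    by (simp add: abs_mult)
  also have "\<dots> \<le> (\<Sum>c\<in>D. \<bar>B a c\<bar> * W ^ i)"
  proof (rule sum_mono)
    fix c assume c: "c \<in> D"
    show "\<bar>B a c\<bar> * \<bar>restr_pow B D i c b\<bar> \<le> \<bar>B a c\<bar> * W ^ i"
      by (rule mult_left_mono[OF Suc.IH[OF c]]) simp
  qed
  also have "\<dots> = (\<Sum>c\<in>D. \<bar>B a c\<bar>) * W ^ i" by (simp add: sum_distrib_right)
  also have "\<dots> \<le> W * W ^ i"
    using assms(1)[OF Suc.prems] assms(2) by (intro mult_right_mono) simp_all
  finally show ?case by simp
qed

lemma rp_lyap:
  assumes fin: "finite D"
    and Bnn: "\<And>x y. x \<in> D \<Longrightarrow> y \<in> D \<Longrightarrow> B x y \<ge> 0"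
    and ly: "\<And>x. x \<in> D \<Longrightarrow> (\<Sum>c\<in>D. B x c * g c) \<le> \<mu> * g x"
    and mu: "\<mu> \<ge> 0" and "a \<in> D"
  shows "(\<Sum>b\<in>D. restr_pow B D i a b * g b) \<le> \<mu> ^ i * g a"
  using assms(5)
proof (induction i arbitrary: a)
  case 0
  have "(\<Sum>b\<in>D. restr_pow B D 0 a b * g b) = (\<Sum>b\<in>D. if a = b then g b else 0)"
    by (rule sum.cong) auto
  then show ?case using fin 0 by simp
next
  case (Suc i)
  have "(\<Sum>b\<in>D. restr_pow B D (Suc i) a b * g b) = (\<Sum>c\<in>D. B a c * (\<Sum>b\<in>D. restr_pow B D i c b * g b))"
  proof -
    have "(\<Sum>b\<in>D. restr_pow B D (Suc i) a b * g b) = (\<Sum>b\<in>D. \<Sum>c\<in>D. B a c * restr_pow B D i c b * g b)"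
      by (simp add: sum_distrib_right)
    also have "\<dots> = (\<Sum>c\<in>D. \<Sum>b\<in>D. B a c * restr_pow B D i c b * g b)"
      by (rule sum.swap)
    also have "\<dots> = (\<Sum>c\<in>D. B a c * (\<Sum>b\<in>D. restr_pow B D i c b * g b))"
      by (simp add: sum_distrib_left mult.assoc)
    finally show ?thesis .
  qed
  also have "\<dots> \<le> (\<Sum>c\<in>D. B a c * (\<mu> ^ i * g c))"
  proof (rule sum_mono)
    fix c assume c: "c \<in> D"
    show "B a c * (\<Sum>b\<in>D. restr_pow B D i c b * g b) \<le> B a c * (\<mu> ^ i * g c)"
      by (rule mult_left_mono[OF Suc.IH[OF c] Bnn[OF Suc.prems c]])
  qed
  also have "\<dots> = \<mu> ^ i * (\<Sum>c\<in>D. B a c * g c)"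
    by (simp add: sum_distrib_left mult.left_commute)
  also have "\<dots> \<le> \<mu> ^ i * (\<mu> * g a)"
    by (rule mult_left_mono[OF ly[OF Suc.prems]]) (simp add: mu)
  finally show ?case by (simp add: mult_ac)
qed


lemma exp_series_real: "(\<lambda>n. x ^ n / fact n) sums exp (x::real)"
  using exp_converges[of x] by (simp add: divide_inverse mult.commute)

lemma kernel_lyap:
  fixes Q :: "nat \<Rightarrow> nat \<Rightarrow> real"
  assumes fin: "finite D" and aD: "a \<in> D"
    and off: "\<And>x y. x \<in> D \<Longrightarrow> y \<in> D \<Longrightarrow> x \<noteq> y \<Longrightarrow> Q x y \<ge> 0"
    and diag: "\<And>x. x \<in> D \<Longrightarrow> Q x x + m \<ge> 0"
    and lam: "l \<le> m" and t: "t \<ge> 0"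
    and gnn: "\<And>x. x \<in> D \<Longrightarrow> g x \<ge> 0"
    and ly: "\<And>x. x \<in> D \<Longrightarrow> (\<Sum>c\<in>D. Q x c * g c) \<le> - l * g x"
  shows "(\<forall>b. killed_kernel Q D t a b \<ge> 0) \<and>
         (\<Sum>b\<in>D. killed_kernel Q D t a b * g b) \<le> exp (- l * t) * g a"
proof -
  define B where "B = (\<lambda>x y. Q x y + (if x = y then m else 0))"
  define P where "P = restr_pow B D"
  have Bnn: "\<And>x y. x \<in> D \<Longrightarrow> y \<in> D \<Longrightarrow> B x y \<ge> 0"
    unfolding B_def using off diag by (case_tac "x = y") auto
  define W where "W = 1 + (\<Sum>x\<in>D. \<Sum>y\<in>D. \<bar>B x y\<bar>)"
  have W1: "W \<ge> 1" unfolding W_def by (simp add: sum_nonneg)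
  have Wb: "(\<Sum>y\<in>D. \<bar>B x y\<bar>) \<le> W" if "x \<in> D" for x
  proof -
    have "(\<Sum>y\<in>D. \<bar>B x y\<bar>) \<le> (\<Sum>x\<in>D. \<Sum>y\<in>D. \<bar>B x y\<bar>)"
      by (rule member_le_sum[OF that _ fin]) (simp add: sum_nonneg)
    then show ?thesis unfolding W_def by simp
  qed
  have Pnn: "\<And>i b. P i a b \<ge> 0" unfolding P_def by (rule rp_nonneg[OF Bnn aD])
  have Pb: "\<And>i b. \<bar>P i a b\<bar> \<le> W ^ i" unfolding P_def by (rule rp_bound[OF Wb W1 aD])
  define A where "A = (\<lambda>b i. t ^ i / fact i * P i a b)"
  have Abound: "norm (A b i) \<le> (t * W) ^ i / fact i" for b i
  proof -
    have "norm (A b i) = t ^ i / fact i * \<bar>P i a b\<bar>" unfolding A_def using t by (simp add: abs_mult)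
    also have "\<dots> \<le> t ^ i / fact i * W ^ i" by (rule mult_left_mono[OF Pb]) (simp add: t)
    finally show ?thesis by (simp add: power_mult_distrib)
  qed
  have sumA: "summable (\<lambda>i. norm (A b i))" for b
    by (rule summable_comparison_test[of _ "\<lambda>i. (t * W) ^ i / fact i"])
       (use Abound exp_series_real in \<open>auto intro: sums_summable\<close>)
  define X where "X = (\<lambda>j. (- m * t) ^ j / fact j)"
  have Xs: "X sums exp (- m * t)" unfolding X_def by (rule exp_series_real)
  have sumX: "summable (\<lambda>j. norm (X j))"
    using exp_series_real[of "\<bar>m * t\<bar>"] unfolding X_def
    by (auto intro: sums_summable simp: power_abs abs_mult)
  have conv: "(\<lambda>n. t ^ n / fact n * restr_pow Q D n a b) = (\<lambda>n. \<Sum>i\<le>n. A b i * X (n - i))" for b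
  proof
    fix n
    have "t ^ n / fact n * restr_pow Q D n a b = (\<Sum>i\<le>n. t ^ n / fact n * (real (n choose i) * (-m)^(n-i) * P i a b))"
      unfolding rp_binom[OF fin aD, of Q n b m] P_def B_def by (simp add: sum_distrib_left)
    also have "\<dots> = (\<Sum>i\<le>n. A b i * X (n - i))"
    proof (rule sum.cong[OF refl])
      fix i assume "i \<in> {..n}"
      then have i: "i \<le> n" by simp
      have tn: "t ^ n = t ^ i * t ^ (n - i)" using i by (simp add: power_add[symmetric])
      show "t ^ n / fact n * (real (n choose i) * (-m)^(n-i) * P i a b) = A b i * X (n - i)"
      proof -
        have mn: "(- m * t) ^ (n - i) = (-m)^(n-i) * t^(n-i)" by (rule power_mult_distrib)
        show ?thesis unfolding A_def X_def binomial_fact[OF i] tn mn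
          by (simp add: field_simps)
      qed
    qed
    finally show "t ^ n / fact n * restr_pow Q D n a b = (\<Sum>i\<le>n. A b i * X (n - i))" .
  qed
  have KK: "killed_kernel Q D t a b = suminf (A b) * exp (- m * t)" for b
  proof -
    have "(\<lambda>n. \<Sum>i\<le>n. A b i * X (n - i)) sums (suminf (A b) * suminf X)"
      by (rule Cauchy_product_sums[OF sumA sumX])
    then have "(\<lambda>n. t ^ n / fact n * restr_pow Q D n a b) sums (suminf (A b) * exp (- m * t))"
      using conv sums_unique[OF Xs] by simp
    then show ?thesis unfolding killed_kernel_def by (rule sums_unique[symmetric])
  qed
  have sA: "summable (A b)" for b using sumA summable_norm_cancel by blast
  have Ann: "suminf (A b) \<ge> 0" for b
    by (rule suminf_nonneg[OF sA]) (simp add: A_def Pnn t)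
  have part1: "\<forall>b. killed_kernel Q D t a b \<ge> 0" using KK Ann by simp
  define \<mu> where "\<mu> = m - l"
  have mu: "\<mu> \<ge> 0" using lam unfolding \<mu>_def by simp
  have lyB: "(\<Sum>c\<in>D. B x c * g c) \<le> \<mu> * g x" if x: "x \<in> D" for x
  proof -
    have "(\<Sum>c\<in>D. B x c * g c) = (\<Sum>c\<in>D. Q x c * g c) + (\<Sum>c\<in>D. (if x = c then m * g c else 0))"
      unfolding B_def sum.distrib[symmetric] by (rule sum.cong) (auto simp: distrib_right)
    also have "(\<Sum>c\<in>D. (if x = c then m * g c else 0)) = m * g x" using fin x by simp
    finally show ?thesis using ly[OF x] unfolding \<mu>_def by (simp add: algebra_simps)
  qed
  have PL: "(\<Sum>b\<in>D. P i a b * g b) \<le> \<mu> ^ i * g a" for i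
    unfolding P_def by (rule rp_lyap[OF fin Bnn lyB mu aD])
  have "(\<Sum>b\<in>D. killed_kernel Q D t a b * g b) = exp (- m * t) * (\<Sum>b\<in>D. suminf (A b) * g b)"
    by (simp add: KK sum_distrib_left mult_ac)
  also have "(\<Sum>b\<in>D. suminf (A b) * g b) = (\<Sum>b\<in>D. \<Sum>i. A b i * g b)"
    by (rule sum.cong[OF refl]) (rule suminf_mult2[OF sA])
  also have "\<dots> = (\<Sum>i. \<Sum>b\<in>D. A b i * g b)"
    by (rule suminf_sum[symmetric]) (intro summable_mult2 sA)
  also have "\<dots> \<le> (\<Sum>i. t ^ i / fact i * (\<mu> ^ i * g a))"
  proof (rule suminf_le)
    fix i
    have "(\<Sum>b\<in>D. A b i * g b) = t ^ i / fact i * (\<Sum>b\<in>D. P i a b * g b)"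
      unfolding A_def by (simp add: sum_distrib_left mult_ac)
    also have "\<dots> \<le> t ^ i / fact i * (\<mu> ^ i * g a)"
      by (rule mult_left_mono[OF PL]) (simp add: t)
    finally show "(\<Sum>b\<in>D. A b i * g b) \<le> t ^ i / fact i * (\<mu> ^ i * g a)" .
  next
    show "summable (\<lambda>i. \<Sum>b\<in>D. A b i * g b)"
      by (intro summable_sum summable_mult2 sA)
  next
    have "(\<lambda>i. (t * \<mu>) ^ i / fact i * g a) sums (exp (t * \<mu>) * g a)"
      by (rule sums_mult2[OF exp_series_real])
    then show "summable (\<lambda>i. t ^ i / fact i * (\<mu> ^ i * g a))"
      by (auto dest!: sums_summable simp: power_mult_distrib mult_ac)
  qed
  also have "\<dots> = exp (t * \<mu>) * g a"
  proof -
    have "(\<lambda>i. (t * \<mu>) ^ i / fact i * g a) sums (exp (t * \<mu>) * g a)"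
      by (rule sums_mult2[OF exp_series_real])
    then show ?thesis by (simp add: sums_iff power_mult_distrib mult_ac)
  qed
  finally have "(\<Sum>b\<in>D. killed_kernel Q D t a b * g b) \<le> exp (- m * t) * (exp (t * \<mu>) * g a)"
    by (simp add: mult_left_mono)
  also have "\<dots> = exp (- l * t) * g a"
    unfolding \<mu>_def mult.assoc[symmetric] exp_add[symmetric] by (simp add: algebra_simps)
  finally show ?thesis using part1 by simp
qed


lemma SQ: "(\<Sum>i\<in>{s..<s+n}. (real i + c)^2) =
   real n * (real s + c)^2 + (real s + c) * real n * (real n - 1) + (real n - 1) * real n * (2 * real n - 1) / 6"
proof (induction n)
  case 0 then show ?case by simp
next
  case (Suc n)
  have "(\<Sum>i\<in>{s..<s+Suc n}. (real i + c)^2) = (\<Sum>i\<in>{s..<s+n}. (real i + c)^2) + (real (s+n) + c)^2"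
    by simp
  also have "\<dots> = real (Suc n) * (real s + c)^2 + (real s + c) * real (Suc n) * (real (Suc n) - 1) + (real (Suc n) - 1) * real (Suc n) * (2 * real (Suc n) - 1) / 6"
    unfolding Suc.IH by (simp add: field_simps power2_eq_square)
  finally show ?case .
qed

lemma frac_aux0:
  fixes p q r n :: real
  assumes "p > 0" "q > 0" "r > 0" "q = p + 2 * n" "r = q + 2"
  shows "n / (p * q) + 1 / (q * r) = (n + 1) / (p * r)"
proof -
  have e1: "n / (p * q) + 1 / (q * r) = (n * r + p) / (p * q * r)"
    using assms(1-3) by (simp add: field_simps)
  have e2: "(n + 1) / (p * r) = ((n + 1) * q) / (p * q * r)"
    using assms(1-3) by (simp add: field_simps)
  have e3: "n * r + p = (n + 1) * q" using assms(4,5) by (simp add: algebra_simps)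
  show ?thesis unfolding e1 e2 e3 ..
qed

lemma frac_aux:
  fixes p q n :: real
  assumes "p > 0" "q = p + 2 * n" "n \<ge> 0"
  shows "n / (p * q) + 1 / (q * (q + 2)) = (n + 1) / (p * (q + 2))"
  using frac_aux0[of p q "q+2" n] assms by simp

lemma usum:
  assumes "1 \<le> s"
  shows "(\<Sum>j\<in>{s..<s+n}. 1 / ((2 * real j - 1) * (2 * real j + 1))) = real n / ((2 * real s - 1) * (2 * real (s+n) - 1))"
proof (induction n)
  case 0 then show ?case by simp
next
  case (Suc n)
  have s1: "2 * real s - 1 > 0" using assms by simp
  have s2: "2 * real (s+n) - 1 > 0" using assms by simp
  have s3: "2 * real (s+n) + 1 > 0" by simp
  have "(\<Sum>j\<in>{s..<s+Suc n}. 1 / ((2 * real j - 1) * (2 * real j + 1))) =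
     real n / ((2 * real s - 1) * (2 * real (s+n) - 1)) + 1 / ((2 * real (s+n) - 1) * (2 * real (s+n) + 1))"
    using Suc.IH by simp
  also have "\<dots> = real (Suc n) / ((2 * real s - 1) * (2 * real (s + Suc n) - 1))"
    using frac_aux[OF s1, of "2 * real (s+n) - 1" "real n"] by (simp add: algebra_simps)
  finally show ?case .
qed

lemma dsplit_aux0:
  fixes K u w v :: real
  assumes "w * v = 4 * u^2 - 1" "w * v \<noteq> 0"
  shows "(K + 3 * u^2 - 1) / (w * v) = 3/4 + (K - 1/4) * (1 / (v * w))"
proof -
  have h: "K + 3 * u^2 - 1 = 3/4 * (w * v) + (K - 1/4)" unfolding assms(1) by (simp add: field_simps)
  have "(K + 3 * u^2 - 1) / (w * v) = (3/4 * (w * v) + (K - 1/4)) / (w * v)"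
    by (simp only: h)
  also have "\<dots> = 3/4 * (w * v) / (w * v) + (K - 1/4) / (w * v)"
    by (rule add_divide_distrib)
  also have "\<dots> = 3/4 + (K - 1/4) * (1 / (v * w))" using assms(2) by (simp add: mult.commute)
  finally show ?thesis .
qed

lemma dsplit_aux:
  fixes K u :: real
  assumes "u \<ge> 1"
  shows "(K + 3 * u^2 - 1) / ((2 * u + 1) * (2 * u - 1)) = 3/4 + (K - 1/4) * (1 / ((2 * u - 1) * (2 * u + 1)))"
proof -
  have p1: "2 * u + 1 > 0" and p2: "2 * u - 1 > 0" using assms by auto
  have p3: "(2 * u + 1) * (2 * u - 1) > 0" by (rule mult_pos_pos[OF p1 p2])
  show ?thesis
    by (rule dsplit_aux0) (use p3 in \<open>auto simp: algebra_simps power2_eq_square\<close>)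
qed

lemma dterm_aux0:
  fixes X u w v :: real
  assumes "w \<noteq> 0" "v \<noteq> 0"
  shows "X / (w * v) * ((u + 1) * w / 6) = X * ((u + 1) / (6 * v))"
  using assms by (simp add: field_simps)

lemma dterm_aux:
  fixes X u :: real
  assumes "u \<ge> 1"
  shows "X / ((2 * u + 1) * (2 * u - 1)) * ((u + 1) * (2 * u + 1) / 6) = X * ((u + 1) / (6 * (2 * u - 1)))"
  by (rule dterm_aux0) (use assms in auto)

lemma delta_split:
  assumes "j \<ge> 1"
  shows "delta k j = 3/4 + ((real k)^2 - 1/4) * (1 / ((2 * real j - 1) * (2 * real j + 1)))"
proof -
  have p: "(2 * real j + 1) * (2 * real j - 1) > 0" using assms by (simp add: mult_pos_pos)
  show ?thesis unfolding delta_def by (rule dsplit_aux) (use assms in simp)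
qed

lemma delta_nn:
  assumes "j \<ge> 1" shows "delta k j \<ge> 0"
proof -
  have jj: "(real j)^2 \<ge> 1" using assms by simp
  have kk: "(real k)^2 \<ge> 0" by simp
  have X: "(real k)^2 + 3 * (real j)^2 - 1 \<ge> 0" using jj kk by linarith
  have Y: "(2 * real j + 1) * (2 * real j - 1) > 0" using assms by (intro mult_pos_pos) auto
  show ?thesis unfolding delta_def using X Y by simp
qed

lemma lin_aux:
  fixes K J d T q E :: real
  assumes "(K + 3 * J - 1) / 12 \<le> d * T" "d * q = q * (3/4) + E"
  shows "(K - 1) / 12 + J / 4 - 3 * q / 4 - E \<le> d * (T - q)"
proof -
  have "d * (T - q) = d * T - d * q" by (rule right_diff_distrib)
  then show ?thesis using assms by (simp add: field_simps)
qed

lemma dterm_lb: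
  assumes "j \<ge> 1"
  shows "delta k j * ((real j + 1) * (2 * real j + 1) / 6 - (real a)^2) \<ge>
     ((real k)^2 - 1) / 12 + (real j)^2 / 4 - 3 * (real a)^2 / 4
       - (real a)^2 * ((real k)^2 - 1/4) * (1 / ((2 * real j - 1) * (2 * real j + 1)))"
proof -
  have j1: "2 * real j - 1 > 0" using assms by simp
  have jj: "(real j)^2 \<ge> 1" using assms by simp
  have kk: "(real k)^2 \<ge> 0" by simp
  have X: "(real k)^2 + 3 * (real j)^2 - 1 \<ge> 0" using jj kk by linarith
  have "delta k j * ((real j + 1) * (2 * real j + 1) / 6) = ((real k)^2 + 3 * (real j)^2 - 1) * ((real j + 1) / (6 * (2 * real j - 1)))"
    unfolding delta_def by (rule dterm_aux) (use assms in simp)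
  also have "\<dots> \<ge> ((real k)^2 + 3 * (real j)^2 - 1) * (1/12)"
    by (rule mult_left_mono[OF _ X]) (use j1 in \<open>simp add: field_simps\<close>)
  finally have A: "delta k j * ((real j + 1) * (2 * real j + 1) / 6) \<ge> ((real k)^2 + 3 * (real j)^2 - 1) / 12" by simp
  define Dj where "Dj = 1 / ((2 * real j - 1) * (2 * real j + 1))"
  have ds: "delta k j = 3/4 + ((real k)^2 - 1/4) * Dj" unfolding Dj_def by (rule delta_split[OF assms])
  have B: "delta k j * (real a)^2 = (real a)^2 * (3/4) + (real a)^2 * ((real k)^2 - 1/4) * Dj"
    unfolding ds by (simp add: algebra_simps)
  have C: "delta k j * ((real j + 1) * (2 * real j + 1) / 6 - (real a)^2) = delta k j * ((real j + 1) * (2 * real j + 1) / 6) - delta k j * (real a)^2"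
    by (rule right_diff_distrib)
  define E where "E = (real a)^2 * ((real k)^2 - 1/4) * Dj"
  have B': "delta k j * (real a)^2 = (real a)^2 * (3/4) + E" using B unfolding E_def .
  have G: "((real k)^2 - 1) / 12 + (real j)^2 / 4 - 3 * (real a)^2 / 4 - E
     \<le> delta k j * ((real j + 1) * (2 * real j + 1) / 6 - (real a)^2)"
    by (rule lin_aux[OF A B'])
  then show ?thesis unfolding E_def Dj_def .
qed

lemma I1:
  fixes a k :: real
  assumes "a \<ge> 2" "k \<ge> a + 1"
  shows "(a * (1 + (k-1)/2)^2 + (1 + (k-1)/2) * a * (a - 1) + (a - 1) * a * (2*a - 1)/6 + a * (k^2 - 1)/12 - a^3)
     + (k - a) * ((k^2 - 1)/12 - 3 * a^2 / 4)
     + ((k - a) * a^2 + a * (k - a) * (k - a - 1) + (k - a - 1) * (k - a) * (2 * (k - a) - 1) / 6) / 4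
     - (a + 1) * (2 * k + 1) * (k - a) / 8 \<ge> (k^3 - k) / 12"
proof -
  define e where "e = a - 2"
  define d where "d = k - a - 1"
  have e: "e \<ge> 0" and d: "d \<ge> 0" using assms by (auto simp: e_def d_def)
  have a: "a = e + 2" and k: "k = e + d + 3" by (auto simp: e_def d_def)
  have P: "0 \<le> 3/8 + d/6 + 3/8*d^2 + d^3/12 + 37/24*e + 7/8*e*d + e*d^2/4 + 3/4*e^2 + e^2*d/4 + e^3/12"
    using e d by (intro add_nonneg_nonneg mult_nonneg_nonneg) auto
  show ?thesis using P unfolding a k by (simp add: algebra_simps power2_eq_square power3_eq_cube divide_simps)
qed

lemma I2:
  fixes k :: real
  assumes "k \<ge> 2"
  shows "((1 + (k-1)/2)^2 + (k^2 - 1)/12 - 1)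
     + (k - 2) * ((k^2 - 1)/12 - 3 / 4)
     + ((k - 2) * 4 + 2 * (k - 2) * (k - 3) + (k - 3) * (k - 2) * (2 * (k - 2) - 1) / 6) / 4
     - (2 * k + 1) * (k - 2) / 12 \<ge> (k^3 - k) / 12"
proof -
  define d where "d = k - 2"
  have d: "d \<ge> 0" using assms by (auto simp: d_def)
  have k: "k = d + 2" by (auto simp: d_def)
  have P: "0 \<le> 1 + 13/24*d + 3/8*d^2 + d^3/12"
    using d by (intro add_nonneg_nonneg mult_nonneg_nonneg) auto
  show ?thesis using P unfolding k by (simp add: algebra_simps power2_eq_square power3_eq_cube divide_simps)
qed


lemma bt_alg:
  fixes r x A :: real
  assumes "r > 0"
  shows "(r * x^2 + x * r * (r - 1) + (r - 1) * r * (2 * r - 1) / 6 - r * A) / r = (x + (r - 1)/2)^2 + (r^2 - 1)/12 - A"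
  using assms by (simp add: field_simps) (simp add: algebra_simps power2_eq_square)

lemma blk_i:
  assumes "1 \<le> i" "i + k - 1 \<le> N" "k \<ge> 1"
  shows "(\<Sum>z\<in>{1..N}. (if i \<le> a \<and> a \<le> i+k-1 \<and> i \<le> z \<and> z \<le> i+k-1 then 1 / real k else 0) * ((real z)^2 - (real a)^2))
     = (if i \<le> a \<and> a \<le> i+k-1 then (real i + (real k - 1)/2)^2 + ((real k)^2-1)/12 - (real a)^2 else 0)"
proof (cases "i \<le> a \<and> a \<le> i+k-1")
  case False
  have "\<And>z. (if i \<le> a \<and> a \<le> i+k-1 \<and> i \<le> z \<and> z \<le> i+k-1 then 1 / real k else 0) = 0" using False by auto
  then show ?thesis unfolding if_not_P[OF False] by (simp only: mult_zero_left sum.neutral_const)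
next
  case True
  have "(\<Sum>z\<in>{1..N}. (if i \<le> a \<and> a \<le> i+k-1 \<and> i \<le> z \<and> z \<le> i+k-1 then 1 / real k else 0) * ((real z)^2 - (real a)^2))
      = (\<Sum>z\<in>{1..N}. if z \<in> {i..<i+k} then ((real z)^2 - (real a)^2) / real k else 0)"
    by (rule sum.cong) (use True assms in auto)
  also have "\<dots> = (\<Sum>z\<in>{1..N} \<inter> {i..<i+k}. ((real z)^2 - (real a)^2) / real k)"
    by (rule sum.inter_restrict[symmetric]) simp
  also have "{1..N} \<inter> {i..<i+k} = {i..<i+k}" using assms by auto
  also have "(\<Sum>z\<in>{i..<i+k}. ((real z)^2 - (real a)^2) / real k) = ((\<Sum>z\<in>{i..<i+k}. (real z + 0)^2) - real k * (real a)^2) / real k"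
    by (simp add: sum_divide_distrib[symmetric] sum_subtractf)
  also have "\<dots> = (real k * (real i)^2 + real i * real k * (real k - 1) + (real k - 1) * real k * (2 * real k - 1) / 6 - real k * (real a)^2) / real k"
    unfolding SQ by simp
  also have "\<dots> = (real i + (real k - 1)/2)^2 + ((real k)^2-1)/12 - (real a)^2"
    by (rule bt_alg) (use assms in simp)
  finally show ?thesis using True by simp
qed

lemma dlt_j:
  assumes "2 \<le> j" "j \<le> k - 1" "6 * k \<le> N" "a \<le> 4 * k"
  shows "(\<Sum>z\<in>{1..N}. delta k j * ((if a \<le> j \<and> z \<le> j then 1 / real j else 0) + (if N + 1 - j \<le> a \<and> N + 1 - j \<le> z then 1 / real j else 0)) * ((real z)^2 - (real a)^2))
     = (if a \<le> j then delta k j * ((real j + 1) * (2 * real j + 1) / 6 - (real a)^2) else 0)"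
proof -
  have nr: "\<not> (N + 1 - j \<le> a)" using assms by auto
  show ?thesis
  proof (cases "a \<le> j")
    case False then show ?thesis using nr by simp
  next
    case True
    have "(\<Sum>z\<in>{1..N}. delta k j * ((if a \<le> j \<and> z \<le> j then 1 / real j else 0) + (if N + 1 - j \<le> a \<and> N + 1 - j \<le> z then 1 / real j else 0)) * ((real z)^2 - (real a)^2))
      = (\<Sum>z\<in>{1..N}. if z \<in> {1..<1+j} then delta k j * (((real z)^2 - (real a)^2) / real j) else 0)"
      by (rule sum.cong) (use True nr in auto)
    also have "\<dots> = (\<Sum>z\<in>{1..N} \<inter> {1..<1+j}. delta k j * (((real z)^2 - (real a)^2) / real j))"
      by (rule sum.inter_restrict[symmetric]) simp
    also have "{1..N} \<inter> {1..<1+j} = {1..<1+j}" using assms by auto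
    also have "(\<Sum>z\<in>{1..<1+j}. delta k j * (((real z)^2 - (real a)^2) / real j)) = delta k j * (((\<Sum>z\<in>{1..<1+j}. (real z + 0)^2) - real j * (real a)^2) / real j)"
      by (simp add: sum_distrib_left[symmetric] sum_divide_distrib[symmetric] sum_subtractf)
    also have "(\<Sum>z\<in>{1..<1+j}. (real z + 0)^2) = real j * (real j + 1) * (2 * real j + 1) / 6"
      unfolding SQ by (simp add: field_simps power2_eq_square)
    also have "(real j * (real j + 1) * (2 * real j + 1) / 6 - real j * (real a)^2) / real j = (real j + 1) * (2 * real j + 1) / 6 - (real a)^2"
      using assms by (simp add: field_simps)
    finally show ?thesis using True by simp
  qed
qed


lemma bulk_alg:
  fixes L r A :: real
  assumes "A = L + r - 1"
  shows "r * (L + (r-1)/2)^2 + (L + (r-1)/2) * r * (r - 1) + (r - 1) * r * (2 * r - 1) / 6 + r * ((r^2 - 1)/12 - A^2) = (r^3 - r) / 6"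
  unfolding assms by (simp add: field_simps) (simp add: algebra_simps power2_eq_square power3_eq_cube)

lemma ga:
  fixes X w y z v :: real
  assumes "w \<noteq> 0" "v \<noteq> 0"
  shows "X * (w * y / 4) * (z / (v * w)) = (z * y / 4) * (X / v)"
  using assms by (simp add: field_simps)

lemma E_bound:
  fixes a k :: real
  assumes "a \<ge> 1" "k \<ge> a"
  shows "a^2 * (k^2 - 1/4) * ((k - a) / ((2*a - 1) * (2*k - 1))) \<le> (a + 1) * (2*k + 1) * (k - a) / 8"
proof -
  have p1: "2*a - 1 > 0" and p2: "2*k - 1 > 0" using assms by auto
  have e: "a^2 * (k^2 - 1/4) * ((k - a) / ((2*a - 1) * (2*k - 1))) = ((k - a) * (2*k + 1) / 4) * (a^2 / (2*a - 1))"
  proof -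
    have h: "k^2 - 1/4 = (2*k-1)*(2*k+1)/4" by (simp add: algebra_simps power2_eq_square)
    show ?thesis unfolding h by (rule ga) (use p1 p2 in auto)
  qed
  have q: "a^2 / (2*a - 1) \<le> (a + 1) / 2"
    using p1 assms(1) by (simp add: divide_le_eq algebra_simps power2_eq_square)
  have "((k - a) * (2*k + 1) / 4) * (a^2 / (2*a - 1)) \<le> ((k - a) * (2*k + 1) / 4) * ((a + 1) / 2)"
    by (rule mult_left_mono[OF q]) (use assms in simp)
  moreover have "((k - a) * (2*k + 1) / 4) * ((a + 1) / 2) = (a + 1) * (2*k + 1) * (k - a) / 8"
    by (simp add: field_simps)
  ultimately show ?thesis unfolding e by linarith
qed

lemma E_eq1:
  fixes k :: real
  assumes "k \<ge> 2"
  shows "1^2 * (k^2 - 1/4) * ((k - 2) / ((2*2 - 1) * (2*k - 1))) = (2 * k + 1) * (k - 2) / 12"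
proof -
  have p2: "2*k - 1 > 0" using assms by auto
  show ?thesis using p2 by (simp add: field_simps) (simp add: algebra_simps power2_eq_square)
qed


lemma F_decomp:
  assumes k2: "2 \<le> k" and N: "6 * k \<le> N" and a1: "1 \<le> a" and a4: "a \<le> 4 * k"
  shows "(\<Sum>z\<in>{1..N}. Sk_rate N k a z * ((real z)^2 - (real a)^2)) =
     (\<Sum>i\<in>{(if k \<le> a then a + 1 - k else 1)..<a+1}. (real i + (real k - 1)/2)^2 + ((real k)^2-1)/12 - (real a)^2)
   + (\<Sum>j\<in>{max 2 a..<k}. delta k j * ((real j + 1) * (2 * real j + 1) / 6 - (real a)^2))"
proof -
  define w where "w z = (real z)^2 - (real a)^2" for z :: nat
  define blk where "blk i z = (if i \<le> a \<and> a \<le> i+k-1 \<and> i \<le> z \<and> z \<le> i+k-1 then 1 / real k else 0)" for i z :: nat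
  define Dz where "Dz j z = delta k j * ((if a \<le> j \<and> z \<le> j then 1 / real j else 0) + (if N + 1 - j \<le> a \<and> N + 1 - j \<le> z then 1 / real j else 0))" for j z :: nat
  define bt where "bt i = (real i + (real k - 1)/2)^2 + ((real k)^2-1)/12 - (real a)^2" for i :: nat
  define dt where "dt j = delta k j * ((real j + 1) * (2 * real j + 1) / 6 - (real a)^2)" for j :: nat
  have r: "Sk_rate N k a z = (\<Sum>i\<in>{1..N+1-k}. blk i z) + (\<Sum>j\<in>{2..k-1}. Dz j z)" for z
    unfolding Sk_rate_def blk_def Dz_def by (rule refl)
  have "(\<Sum>z\<in>{1..N}. Sk_rate N k a z * w z) = (\<Sum>z\<in>{1..N}. \<Sum>i\<in>{1..N+1-k}. blk i z * w z) + (\<Sum>z\<in>{1..N}. \<Sum>j\<in>{2..k-1}. Dz j z * w z)"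
    unfolding r by (simp only: distrib_right sum.distrib sum_distrib_right)
  also have "(\<Sum>z\<in>{1..N}. \<Sum>i\<in>{1..N+1-k}. blk i z * w z) = (\<Sum>i\<in>{1..N+1-k}. \<Sum>z\<in>{1..N}. blk i z * w z)"
    by (rule sum.swap)
  also have "(\<Sum>z\<in>{1..N}. \<Sum>j\<in>{2..k-1}. Dz j z * w z) = (\<Sum>j\<in>{2..k-1}. \<Sum>z\<in>{1..N}. Dz j z * w z)"
    by (rule sum.swap)
  also have "(\<Sum>i\<in>{1..N+1-k}. \<Sum>z\<in>{1..N}. blk i z * w z) = (\<Sum>i\<in>{1..N+1-k}. if i \<le> a \<and> a \<le> i+k-1 then bt i else 0)"
  proof (rule sum.cong[OF refl])
    fix i assume i: "i \<in> {1..N+1-k}"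
    show "(\<Sum>z\<in>{1..N}. blk i z * w z) = (if i \<le> a \<and> a \<le> i+k-1 then bt i else 0)"
      unfolding blk_def w_def bt_def by (rule blk_i) (use i k2 N in auto)
  qed
  also have "\<dots> = (\<Sum>i\<in>{i\<in>{1..N+1-k}. i \<le> a \<and> a \<le> i+k-1}. bt i)"
    by (rule sum.inter_filter[symmetric]) simp
  also have "{i\<in>{1..N+1-k}. i \<le> a \<and> a \<le> i+k-1} = {(if k \<le> a then a + 1 - k else 1)..<a+1}"
    using k2 N a1 a4 by auto
  also have "(\<Sum>j\<in>{2..k-1}. \<Sum>z\<in>{1..N}. Dz j z * w z) = (\<Sum>j\<in>{2..k-1}. if a \<le> j then dt j else 0)"
  proof (rule sum.cong[OF refl])
    fix j assume j: "j \<in> {2..k-1}"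
    show "(\<Sum>z\<in>{1..N}. Dz j z * w z) = (if a \<le> j then dt j else 0)"
      unfolding Dz_def w_def dt_def by (rule dlt_j) (use j N a4 in auto)
  qed
  also have "\<dots> = (\<Sum>j\<in>{j\<in>{2..k-1}. a \<le> j}. dt j)"
    by (rule sum.inter_filter[symmetric]) simp
  also have "{j\<in>{2..k-1}. a \<le> j} = {max 2 a..<k}"
    using k2 by auto
  finally show ?thesis unfolding w_def bt_def dt_def .
qed


lemma dsum_lb:
  assumes s1: "1 \<le> s" and sk: "s \<le> k"
  shows "(\<Sum>j\<in>{s..<k}. delta k j * ((real j + 1) * (2 * real j + 1) / 6 - (real a)^2)) \<ge>
     (real k - real s) * (((real k)^2 - 1) / 12 - 3 * (real a)^2 / 4)
     + (real (k - s) * (real s)^2 + real s * real (k - s) * (real (k - s) - 1) + (real (k - s) - 1) * real (k - s) * (2 * real (k - s) - 1) / 6) / 4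
     - (real a)^2 * ((real k)^2 - 1/4) * ((real k - real s) / ((2 * real s - 1) * (2 * real k - 1)))"
proof -
  define u where "u j = 1 / ((2 * real j - 1) * (2 * real j + 1))" for j :: nat
  have ks: "k = s + (k - s)" using sk by simp
  have "(\<Sum>j\<in>{s..<k}. delta k j * ((real j + 1) * (2 * real j + 1) / 6 - (real a)^2)) \<ge>
     (\<Sum>j\<in>{s..<k}. ((real k)^2 - 1) / 12 + (real j)^2 / 4 - 3 * (real a)^2 / 4 - (real a)^2 * ((real k)^2 - 1/4) * u j)"
    unfolding u_def by (rule sum_mono) (rule dterm_lb, use s1 in auto)
  also have "(\<Sum>j\<in>{s..<k}. ((real k)^2 - 1) / 12 + (real j)^2 / 4 - 3 * (real a)^2 / 4 - (real a)^2 * ((real k)^2 - 1/4) * u j)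
     = real (k - s) * (((real k)^2 - 1) / 12 - 3 * (real a)^2 / 4) + (\<Sum>j\<in>{s..<k}. (real j + 0)^2) / 4 - (real a)^2 * ((real k)^2 - 1/4) * (\<Sum>j\<in>{s..<k}. u j)"
  proof -
    define c where "c = (real a)^2 * ((real k)^2 - 1/4)"
    define C0 where "C0 = ((real k)^2 - 1) / 12 - 3 * (real a)^2 / 4"
    have "(\<Sum>j\<in>{s..<k}. ((real k)^2 - 1) / 12 + (real j)^2 / 4 - 3 * (real a)^2 / 4 - (real a)^2 * ((real k)^2 - 1/4) * u j)
       = (\<Sum>j\<in>{s..<k}. (C0 + (real j + 0)^2 / 4) - c * u j)"
      by (rule sum.cong) (simp_all add: c_def C0_def algebra_simps)
    also have "\<dots> = (\<Sum>j\<in>{s..<k}. C0 + (real j + 0)^2 / 4) - (\<Sum>j\<in>{s..<k}. c * u j)"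
      by (rule sum_subtractf)
    also have "\<dots> = ((\<Sum>j\<in>{s..<k}. C0) + (\<Sum>j\<in>{s..<k}. (real j + 0)^2) / 4) - c * (\<Sum>j\<in>{s..<k}. u j)"
      by (simp only: sum.distrib sum_distrib_left[symmetric] sum_divide_distrib[symmetric])
    also have "(\<Sum>j\<in>{s..<k}. C0) = real (k - s) * C0" by simp
    finally show ?thesis unfolding c_def C0_def .
  qed
  also have "(\<Sum>j\<in>{s..<k}. (real j + 0)^2) = real (k - s) * (real s)^2 + real s * real (k - s) * (real (k - s) - 1) + (real (k - s) - 1) * real (k - s) * (2 * real (k - s) - 1) / 6"
    by (subst ks, subst SQ) simp
  also have "(\<Sum>j\<in>{s..<k}. u j) = (real k - real s) / ((2 * real s - 1) * (2 * real k - 1))"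
  proof -
    have "(\<Sum>j\<in>{s..<k}. u j) = real (k - s) / ((2 * real s - 1) * (2 * real (s + (k - s)) - 1))"
      unfolding u_def by (subst ks, rule usum[OF s1])
    then show ?thesis using sk by (simp add: of_nat_diff)
  qed
  finally show ?thesis using sk by (simp add: of_nat_diff)
qed

lemma half_aux:
  fixes F X :: real
  shows "F = X / 6 \<Longrightarrow> 0 \<le> X \<Longrightarrow> X / 12 \<le> F"
  by simp

lemma comb_aux:
  fixes b D d T :: real
  shows "d \<le> D \<Longrightarrow> T \<le> b + d \<Longrightarrow> T \<le> b + D"
  by simp

lemma sub_aux:
  fixes X P E V P' :: real
  shows "P - E \<le> X \<Longrightarrow> E = V \<Longrightarrow> P = P' \<Longrightarrow> P' - V \<le> X"
  by simp

lemma F_lb: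
  assumes k2: "2 \<le> k" and N: "6 * k \<le> N" and a1: "1 \<le> a" and a4: "a \<le> 4 * k"
  shows "(\<Sum>z\<in>{1..N}. Sk_rate N k a z * ((real z)^2 - (real a)^2)) \<ge> ((real k)^3 - real k) / 12"
proof (cases "k \<le> a")
  case True
  have L: "(if k \<le> a then a + 1 - k else 1) = (a + 1 - k)" using True by simp
  have e: "{a + 1 - k..<a+1} = {a + 1 - k..<(a + 1 - k) + k}" using True by simp
  have em: "{max 2 a..<k} = {}" using True by auto
  have "(\<Sum>i\<in>{a + 1 - k..<a+1}. (real i + (real k - 1)/2)^2 + ((real k)^2-1)/12 - (real a)^2)
     = (\<Sum>i\<in>{a + 1 - k..<(a + 1 - k) + k}. (real i + (real k - 1)/2)^2) + real k * (((real k)^2-1)/12 - (real a)^2)"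
    unfolding e by (simp add: sum.distrib sum_subtractf algebra_simps)
  also have "\<dots> = ((real k)^3 - real k) / 6"
    unfolding SQ by (rule bulk_alg) (use True in \<open>simp add: of_nat_diff\<close>)
  finally have "(\<Sum>z\<in>{1..N}. Sk_rate N k a z * ((real z)^2 - (real a)^2)) = ((real k)^3 - real k) / 6"
    unfolding F_decomp[OF k2 N a1 a4] L em by simp
  moreover have "(real k)^3 - real k \<ge> 0"
  proof -
    have k1: "(real k)^2 \<ge> 1" using k2 by simp
    have "real k * 1 \<le> real k * (real k)^2" by (rule mult_left_mono[OF k1]) simp
    then show ?thesis by (simp add: power3_eq_cube power2_eq_square)
  qed
  ultimately show ?thesis using half_aux by blast
next
  case False
  have L: "(if k \<le> a then a + 1 - k else 1) = 1" using False by simp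
  have blk: "(\<Sum>i\<in>{1..<a+1}. (real i + (real k - 1)/2)^2 + ((real k)^2-1)/12 - (real a)^2)
     = real a * (1 + (real k - 1)/2)^2 + (1 + (real k - 1)/2) * real a * (real a - 1) + (real a - 1) * real a * (2 * real a - 1) / 6 + real a * ((real k)^2 - 1)/12 - (real a)^3"
  proof -
    have "(\<Sum>i\<in>{1..<a+1}. (real i + (real k - 1)/2)^2 + ((real k)^2-1)/12 - (real a)^2)
       = (\<Sum>i\<in>{1..<1+a}. (real i + (real k - 1)/2)^2) + real a * (((real k)^2-1)/12 - (real a)^2)"
      by (simp add: sum.distrib sum_subtractf algebra_simps)
    then show ?thesis unfolding SQ by (simp add: algebra_simps power2_eq_square power3_eq_cube)
  qed
  show ?thesis
  proof (cases "a = 1")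
    case True
    have s: "max 2 a = 2" using True by simp
    have D: "(\<Sum>j\<in>{2..<k}. delta k j * ((real j + 1) * (2 * real j + 1) / 6 - (real a)^2)) \<ge>
       (real k - 2) * (((real k)^2 - 1) / 12 - 3 / 4)
       + ((real k - 2) * 4 + 2 * (real k - 2) * (real k - 3) + (real k - 3) * (real k - 2) * (2 * (real k - 2) - 1) / 6) / 4
       - (2 * real k + 1) * (real k - 2) / 12"
    proof -
      have h: "real (k - 2) = real k - 2" using k2 by (simp add: of_nat_diff)
      have "(\<Sum>j\<in>{2..<k}. delta k j * ((real j + 1) * (2 * real j + 1) / 6 - (real a)^2)) \<ge>
        (real k - real (2::nat)) * (((real k)^2 - 1) / 12 - 3 * (real a)^2 / 4)
        + (real (k - 2) * (real (2::nat))^2 + real (2::nat) * real (k - 2) * (real (k - 2) - 1) + (real (k - 2) - 1) * real (k - 2) * (2 * real (k - 2) - 1) / 6) / 4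
        - (real a)^2 * ((real k)^2 - 1/4) * ((real k - real (2::nat)) / ((2 * real (2::nat) - 1) * (2 * real k - 1)))"
        by (rule dsum_lb) (use k2 in auto)
      moreover have "(real a)^2 * ((real k)^2 - 1/4) * ((real k - real (2::nat)) / ((2 * real (2::nat) - 1) * (2 * real k - 1))) = (2 * real k + 1) * (real k - 2) / 12"
        using E_eq1[of "real k"] k2 True by simp
      moreover have "(real k - real (2::nat)) * (((real k)^2 - 1) / 12 - 3 * (real a)^2 / 4)
        + (real (k - 2) * (real (2::nat))^2 + real (2::nat) * real (k - 2) * (real (k - 2) - 1) + (real (k - 2) - 1) * real (k - 2) * (2 * real (k - 2) - 1) / 6) / 4
        = (real k - 2) * (((real k)^2 - 1) / 12 - 3 / 4)
       + ((real k - 2) * 4 + 2 * (real k - 2) * (real k - 3) + (real k - 3) * (real k - 2) * (2 * (real k - 2) - 1) / 6) / 4"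
        unfolding h using True by (simp add: algebra_simps)
      ultimately show ?thesis using sub_aux by metis
    qed
    have I: "((1 + (real k-1)/2)^2 + ((real k)^2 - 1)/12 - 1)
     + (real k - 2) * (((real k)^2 - 1)/12 - 3 / 4)
     + ((real k - 2) * 4 + 2 * (real k - 2) * (real k - 3) + (real k - 3) * (real k - 2) * (2 * (real k - 2) - 1) / 6) / 4
     - (2 * real k + 1) * (real k - 2) / 12 \<ge> ((real k)^3 - real k) / 12"
      by (rule I2) (use k2 in simp)
    have B1: "(\<Sum>i\<in>{1..<a+1}. (real i + (real k - 1)/2)^2 + ((real k)^2-1)/12 - (real a)^2) = (1 + (real k-1)/2)^2 + ((real k)^2 - 1)/12 - 1"
      unfolding blk using True by simp
    show ?thesis unfolding F_decomp[OF k2 N a1 a4] L s B1 by (rule comb_aux[OF D]) (use I in \<open>simp only: add.assoc add_diff_eq\<close>)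
  next
    case a2: False
    have s: "max 2 a = a" using a1 a2 by simp
    have ak: "a \<le> k" using False by simp
    have h: "real (k - a) = real k - real a" using ak by (simp add: of_nat_diff)
    have D: "(\<Sum>j\<in>{a..<k}. delta k j * ((real j + 1) * (2 * real j + 1) / 6 - (real a)^2)) \<ge>
       (real k - real a) * (((real k)^2 - 1) / 12 - 3 * (real a)^2 / 4)
       + ((real k - real a) * (real a)^2 + real a * (real k - real a) * (real k - real a - 1) + (real k - real a - 1) * (real k - real a) * (2 * (real k - real a) - 1) / 6) / 4
       - (real a + 1) * (2 * real k + 1) * (real k - real a) / 8"
    proof -
      have "(\<Sum>j\<in>{a..<k}. delta k j * ((real j + 1) * (2 * real j + 1) / 6 - (real a)^2)) \<ge>
        (real k - real a) * (((real k)^2 - 1) / 12 - 3 * (real a)^2 / 4)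
        + (real (k - a) * (real a)^2 + real a * real (k - a) * (real (k - a) - 1) + (real (k - a) - 1) * real (k - a) * (2 * real (k - a) - 1) / 6) / 4
        - (real a)^2 * ((real k)^2 - 1/4) * ((real k - real a) / ((2 * real a - 1) * (2 * real k - 1)))"
        by (rule dsum_lb[OF a1 ak])
      moreover have "(real a)^2 * ((real k)^2 - 1/4) * ((real k - real a) / ((2 * real a - 1) * (2 * real k - 1))) \<le> (real a + 1) * (2 * real k + 1) * (real k - real a) / 8"
        by (rule E_bound) (use a1 ak in auto)
      ultimately show ?thesis unfolding h by linarith
    qed
    have I: "(real a * (1 + (real k-1)/2)^2 + (1 + (real k-1)/2) * real a * (real a - 1) + (real a - 1) * real a * (2*real a - 1)/6 + real a * ((real k)^2 - 1)/12 - (real a)^3)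
     + (real k - real a) * (((real k)^2 - 1)/12 - 3 * (real a)^2 / 4)
     + ((real k - real a) * (real a)^2 + real a * (real k - real a) * (real k - real a - 1) + (real k - real a - 1) * (real k - real a) * (2 * (real k - real a) - 1) / 6) / 4
     - (real a + 1) * (2 * real k + 1) * (real k - real a) / 8 \<ge> ((real k)^3 - real k) / 12"
      by (rule I1) (use a1 a2 False in auto)
    show ?thesis unfolding F_decomp[OF k2 N a1 a4] L s blk by (rule comb_aux[OF D]) (use I in \<open>simp only: add.assoc add_diff_eq\<close>)
  qed
qed


lemma rate_nn: "Sk_rate N k x y \<ge> 0"
  unfolding Sk_rate_def
  by (intro add_nonneg_nonneg sum_nonneg mult_nonneg_nonneg delta_nn) auto

lemma rate_far:
  assumes k2: "2 \<le> k" and N: "6 * k \<le> N" and a4: "a \<le> 4 * k" and z: "a + k \<le> z"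
  shows "Sk_rate N k a z = 0"
proof -
  have "(\<Sum>i\<in>{1..N+1-k}. if i \<le> a \<and> a \<le> i+k-1 \<and> i \<le> z \<and> z \<le> i+k-1 then 1 / real k else 0) = 0"
    by (rule sum.neutral) (use z k2 in auto)
  moreover have "(\<Sum>j\<in>{2..k-1}. delta k j * ((if a \<le> j \<and> z \<le> j then 1 / real j else 0) + (if N+1-j \<le> a \<and> N+1-j \<le> z then 1 / real j else 0))) = 0"
    by (rule sum.neutral) (use z k2 N a4 in auto)
  ultimately show ?thesis unfolding Sk_rate_def by simp
qed

lemma gen_row:
  assumes a: "a \<in> {1..N}"
  shows "(\<Sum>c\<in>{1..N}. Sk_gen N k a c * g c) = (\<Sum>c\<in>{1..N}. Sk_rate N k a c * (g c - g a))"
proof -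
  have "(\<Sum>c\<in>{1..N}. Sk_gen N k a c * g c) = Sk_gen N k a a * g a + (\<Sum>c\<in>{1..N}-{a}. Sk_gen N k a c * g c)"
    by (rule sum.remove[OF finite_atLeastAtMost a])
  also have "(\<Sum>c\<in>{1..N}-{a}. Sk_gen N k a c * g c) = (\<Sum>c\<in>{1..N}-{a}. Sk_rate N k a c * g c)"
    by (rule sum.cong) (auto simp: Sk_gen_def)
  also have "(\<Sum>c\<in>{1..N}. Sk_rate N k a c * (g c - g a)) = Sk_rate N k a a * (g a - g a) + (\<Sum>c\<in>{1..N}-{a}. Sk_rate N k a c * (g c - g a))"
    by (rule sum.remove[OF finite_atLeastAtMost a])
  ultimately show ?thesis
    unfolding Sk_gen_def  by (simp add: sum_subtractf right_diff_distrib sum_distrib_right)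
qed


lemma gdiff:
  fixes R C A K :: real
  shows "R * ((25 - C / K) - (25 - A / K)) = - (R * (C - A)) / K"
proof (cases "K = 0")
  case True then show ?thesis by simp
next
  case False then show ?thesis by (simp add: field_simps)
qed

lemma neg_div_mono:
  fixes X S K :: real
  assumes "X \<le> S" "0 < K"
  shows "- S / K \<le> - X / K"
proof -
  have "X / K \<le> S / K" by (rule divide_right_mono) (use assms in auto)
  then show ?thesis by simp
qed

lemma k_ineq:
  fixes kk :: real
  assumes "kk \<ge> 2"
  shows "- ((kk^3 - kk) / 12) / kk^2 \<le> - (kk / 400) * 25"
proof -
  have k4: "kk^2 \<ge> 4" using power_mono[OF assms, of 2] by simp
  have "kk * 4 \<le> kk * kk^2" by (rule mult_left_mono[OF k4]) (use assms in simp)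
  then have h: "kk / 16 * (12 * kk^2) \<le> kk^3 - kk" by (simp add: power2_eq_square power3_eq_cube algebra_simps)
  have p: "12 * kk^2 > 0" using assms by simp
  have "kk / 16 \<le> (kk^3 - kk) / (12 * kk^2)" using h p by (simp add: le_divide_eq)
  then show ?thesis by (simp add: field_simps)
qed

lemma lyap_main:
  assumes k2: "2 \<le> k" and N: "6 * k \<le> N" and aD: "a \<in> {1..4*k}"
  shows "(\<Sum>c\<in>{1..4*k}. Sk_gen N k a c * (25 - (real c)^2 / (real k)^2)) \<le> - (real k / 400) * (25 - (real a)^2 / (real k)^2)"
proof -
  define g where "g c = 25 - (real c)^2 / (real k)^2" for c :: nat
  have kpos: "real k > 0" using k2 by simp
  have aN: "a \<in> {1..N}" using aD N by auto
  have sub: "{1..4*k} \<subseteq> {1..N}" using N by auto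
  have split: "(\<Sum>c\<in>{1..N}. Sk_gen N k a c * g c) = (\<Sum>c\<in>{1..N} - {1..4*k}. Sk_gen N k a c * g c) + (\<Sum>c\<in>{1..4*k}. Sk_gen N k a c * g c)"
    by (rule sum.subset_diff[OF sub]) simp
  have outside: "(\<Sum>c\<in>{1..N} - {1..4*k}. Sk_gen N k a c * g c) \<ge> 0"
  proof (rule sum_nonneg)
    fix c assume c: "c \<in> {1..N} - {1..4*k}"
    then have ca: "c \<noteq> a" using aD by auto
    show "Sk_gen N k a c * g c \<ge> 0"
    proof (cases "a + k \<le> c")
      case True
      then show ?thesis using rate_far[OF k2 N _ True] aD ca by (simp add: Sk_gen_def)
    next
      case False
      then have "c \<le> 5 * k" using aD by auto
      then have "real c \<le> 5 * real k" by simp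
      then have "(real c)^2 \<le> (5 * real k)^2" by (rule power_mono) simp
      then have "(real c)^2 / (real k)^2 \<le> 25" using kpos by (simp add: divide_le_eq power_mult_distrib)
      then have "g c \<ge> 0" unfolding g_def by simp
      then show ?thesis using ca rate_nn by (simp add: Sk_gen_def)
    qed
  qed
  have full: "(\<Sum>c\<in>{1..N}. Sk_gen N k a c * g c) = - (\<Sum>c\<in>{1..N}. Sk_rate N k a c * ((real c)^2 - (real a)^2)) / (real k)^2"
  proof -
    have "(\<Sum>c\<in>{1..N}. Sk_gen N k a c * g c) = (\<Sum>c\<in>{1..N}. Sk_rate N k a c * (g c - g a))"
      by (rule gen_row[OF aN])
    also have "\<dots> = (\<Sum>c\<in>{1..N}. - (Sk_rate N k a c * ((real c)^2 - (real a)^2)) / (real k)^2)"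
        unfolding g_def by (rule sum.cong[OF refl]) (rule gdiff)
    also have "\<dots> = - (\<Sum>c\<in>{1..N}. Sk_rate N k a c * ((real c)^2 - (real a)^2)) / (real k)^2"
      by (simp add: sum_divide_distrib[symmetric] sum_negf)
    finally show ?thesis .
  qed
  have a1: "1 \<le> a" and a4: "a \<le> 4 * k" using aD by auto
  have F: "(\<Sum>c\<in>{1..N}. Sk_rate N k a c * ((real c)^2 - (real a)^2)) \<ge> ((real k)^3 - real k) / 12"
    by (rule F_lb[OF k2 N a1 a4])
  have "- (\<Sum>c\<in>{1..N}. Sk_rate N k a c * ((real c)^2 - (real a)^2)) / (real k)^2 \<le> - (((real k)^3 - real k) / 12) / (real k)^2"
    by (rule neg_div_mono[OF F]) (use kpos in simp)
  also have "\<dots> \<le> - (real k / 400) * 25" by (rule k_ineq) (use k2 in simp)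
  also have "\<dots> \<le> - (real k / 400) * g a"
  proof -
    have "g a \<le> 25" unfolding g_def by simp
    then show ?thesis using kpos by simp
  qed
  finally have "(\<Sum>c\<in>{1..N}. Sk_gen N k a c * g c) \<le> - (real k / 400) * g a" unfolding full .
  then show ?thesis using split outside unfolding g_def by linarith
qed


lemma exp20: "25 * exp (- 20 :: real) \<le> 1/2"
proof -
  have e10: "exp (10::real) \<ge> 11" using exp_ge_add_one_self[of "10::real"] by simp
  have "exp (20::real) = exp 10 * exp 10" by (simp add: exp_add[symmetric])
  also have "\<dots> \<ge> 11 * 11" using e10 by (intro mult_mono) auto
  finally have e20: "exp (20::real) \<ge> 121" by simp
  have "exp (- 20 :: real) = 1 / exp 20" by (simp add: exp_minus divide_inverse)
  then have "25 * exp (- 20 :: real) = 25 / exp 20" by simp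
  also have "\<dots> \<le> 25 / 121" using e20 by (intro divide_left_mono) auto
  finally show ?thesis by simp
qed

lemma main_N:
  assumes k2: "2 \<le> k" and N: "6 * k \<le> N"
  shows "surv_gt N k (4 * k) (8000 / real k) x \<le> 1/2"
proof (cases "x \<in> {1..4*k}")
  case False then show ?thesis unfolding surv_gt_def if_not_P[OF False] by simp
next
  case True
  define D where "D = {1..4*k}"
  define g where "g c = 25 - (real c)^2 / (real k)^2" for c :: nat
  define M where "M = (\<Sum>y\<in>D. \<Sum>z\<in>{1..N}-{y}. Sk_rate N k y z)"
  define l where "l = real k / 400"
  have kpos: "real k > 0" using k2 by simp
  have Mnn: "M \<ge> 0" unfolding M_def by (intro sum_nonneg) (simp add: rate_nn)
  have gD: "g c \<ge> 1" if "c \<in> D" for c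
  proof -
    have "c \<le> 4 * k" using that unfolding D_def by simp
    then have "real c \<le> 4 * real k" by simp
    then have "(real c)^2 \<le> (4 * real k)^2" by (rule power_mono) simp
    then have "(real c)^2 / (real k)^2 \<le> 16" using kpos by (simp add: divide_le_eq power_mult_distrib)
    then show ?thesis unfolding g_def by simp
  qed
  have KL: "(\<forall>b. killed_kernel (Sk_gen N k) D (8000 / real k) x b \<ge> 0) \<and>
         (\<Sum>b\<in>D. killed_kernel (Sk_gen N k) D (8000 / real k) x b * g b) \<le> exp (- l * (8000 / real k)) * g x"
  proof (rule kernel_lyap[where m = "M + l"])
    show "finite D" unfolding D_def by simp
    show "x \<in> D" using True unfolding D_def .
    show "\<And>a b. a \<in> D \<Longrightarrow> b \<in> D \<Longrightarrow> a \<noteq> b \<Longrightarrow> Sk_gen N k a b \<ge> 0"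
      by (simp add: Sk_gen_def rate_nn)
    show "Sk_gen N k y y + (M + l) \<ge> 0" if y: "y \<in> D" for y
    proof -
      have "(\<Sum>z\<in>{1..N}-{y}. Sk_rate N k y z) \<le> M"
        unfolding M_def by (rule member_le_sum[OF y]) (auto intro: sum_nonneg rate_nn simp: D_def)
      moreover have "l \<ge> 0" unfolding l_def by simp
      ultimately show ?thesis by (simp add: Sk_gen_def)
    qed
    show "l \<le> M + l" using Mnn by simp
    show "0 \<le> 8000 / real k" by simp
    show "\<And>y. y \<in> D \<Longrightarrow> g y \<ge> 0" using gD by (meson order_trans zero_le_one)
    show "(\<Sum>c\<in>D. Sk_gen N k y c * g c) \<le> - l * g y" if "y \<in> D" for y
      using lyap_main[OF k2 N, of y] that unfolding D_def g_def l_def by simp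
  qed
  have "surv_gt N k (4 * k) (8000 / real k) x = (\<Sum>b\<in>D. killed_kernel (Sk_gen N k) D (8000 / real k) x b)"
    unfolding surv_gt_def D_def using True by simp
  also have "\<dots> \<le> (\<Sum>b\<in>D. killed_kernel (Sk_gen N k) D (8000 / real k) x b * g b)"
  proof (rule sum_mono)
    fix b assume b: "b \<in> D"
    have "killed_kernel (Sk_gen N k) D (8000 / real k) x b * 1 \<le> killed_kernel (Sk_gen N k) D (8000 / real k) x b * g b"
      by (rule mult_left_mono[OF gD[OF b]]) (use KL in blast)
    then show "killed_kernel (Sk_gen N k) D (8000 / real k) x b \<le> killed_kernel (Sk_gen N k) D (8000 / real k) x b * g b" by simp
  qed
  also have "\<dots> \<le> exp (- l * (8000 / real k)) * g x" using KL by blast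
  also have "- l * (8000 / real k) = - 20" unfolding l_def using kpos by simp
  also have "exp (- 20) * g x \<le> exp (- 20) * 25" unfolding g_def by (intro mult_left_mono) auto
  also have "\<dots> \<le> 1/2" using exp20 by (simp add: mult.commute)
  finally show ?thesis .
qed

theorem lemma5p3:
  shows "\<exists>C::real. C > 0 \<and> (\<exists>c::real. 0 < c \<and> c < 1 \<and>
    (\<forall>k::nat \<Rightarrow> nat. (\<forall>N. 2 \<le> k N) \<and> ((\<lambda>N. real (k N) / real N) \<longlonglongrightarrow> 0) \<longrightarrow>
       (\<forall>\<^sub>F N in sequentially. \<forall>x\<in>{1..N}.
          surv_gt N (k N) (4 * k N) (C / real (k N)) x \<le> c)))"
proof (intro exI conjI allI impI)
  show "(8000::real) > 0" by simp
  show "(0::real) < 1/2" by simp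
  show "(1/2::real) < 1" by simp
  fix k :: "nat \<Rightarrow> nat"
  assume h: "(\<forall>N. 2 \<le> k N) \<and> ((\<lambda>N. real (k N) / real N) \<longlonglongrightarrow> 0)"
  then have lim: "(\<lambda>N. real (k N) / real N) \<longlonglongrightarrow> 0" and k2: "\<And>N. 2 \<le> k N" by auto
  have ev1: "\<forall>\<^sub>F N in sequentially. real (k N) / real N < 1/6"
    by (rule order_tendstoD(2)[OF lim]) simp
  have ev2: "\<forall>\<^sub>F N in sequentially. N \<ge> 1" by (rule eventually_ge_at_top)
  show "\<forall>\<^sub>F N in sequentially. \<forall>x\<in>{1..N}. surv_gt N (k N) (4 * k N) (8000 / real (k N)) x \<le> 1/2"
    using ev1 ev2
  proof eventually_elim
    case (elim N)
    have Np: "real N > 0" using elim by simp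
    have "real (k N) < real N / 6" using elim(1) Np by (simp add: divide_less_eq field_simps)
    then have "6 * k N \<le> N" by linarith
    then show ?case using main_N[OF k2] by blast
  qed
qed

end
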